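(* Let $p\ge 1$, let $\alpha\in[0,1)$ and let $g\in\mathbb{R}^p$ with $g\neq 0$. Let $m$ be an index with $|g_m|=\max_d|g_d|$, and let $I_{12}$ be the $p\times p$ diagonal matrix with $(I_{12})_{dd}=1$ if $|g_d|\ge \alpha|g_m|$ and $(I_{12})_{dd}=0$ otherwise (all off-diagonal entries zero). Define $$\Delta x_{12}:=-I_{12}g\left(\frac{\alpha}{\|I_{12}g\|_1}+\frac{1-\alpha}{\|I_{12}g\|_2}\right),\qquad q_1:=\left(\frac{\|I_{12}g\|_1}{\|I_{12}g\|_2}\right)^2,$$ $$c_\alpha(q_1):=\frac{\sqrt{q_1(\alpha^2q_1+4(1-\alpha))}-\alpha q_1}{2(1-\alpha)(\sqrt{q_1}(1-\alpha)+\alpha)}.$$ If $\Delta x_{12,c}:=c_\alpha(q_1)\cdot\Delta x_{12}$, then $h_\alpha(\Delta x_{12,c})=1$, where $h_\alpha(v):=\alpha\|v\|_1+(1-\alpha)\|v\|_2^2$ for $v\in\mathbb{R}^p$.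
   Context: $g$ plays the role of a gradient vector; $I_{12}$ selects the coordinates whose absolute gradient is at least $\alpha$ times the maximal absolute gradient; $\Delta x_{12}$ is the (non-scaled) elastic gradient descent update direction. *)

theory Defs
  imports "HOL-Analysis.Analysis"
begin

text \<open>l1 norm of a vector in R^p (index type 'n, p = CARD('n)).\<close>
definition norm1 :: "real ^ 'n \<Rightarrow> real" where
  "norm1 v = (\<Sum>i\<in>UNIV. \<bar>v $ i\<bar>)"

definition norm2 :: "real ^ 'n \<Rightarrow> real" where
  "norm2 v = norm v"

definition I12 :: "real \<Rightarrow> real ^ 'n \<Rightarrow> 'n \<Rightarrow> real ^ 'n ^ 'n" where
  "I12 \<alpha> g m = (\<chi> i j. if i = j \<and> \<bar>g $ i\<bar> \<ge> \<alpha> * \<bar>g $ m\<bar> then 1 else 0)"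

definition delta_x12 :: "real \<Rightarrow> real ^ 'n \<Rightarrow> 'n \<Rightarrow> real ^ 'n" where
  "delta_x12 \<alpha> g m =
     - ((\<alpha> / norm1 (I12 \<alpha> g m *v g) + (1 - \<alpha>) / norm2 (I12 \<alpha> g m *v g))
        *\<^sub>R (I12 \<alpha> g m *v g))"

definition q1 :: "real \<Rightarrow> real ^ 'n \<Rightarrow> 'n \<Rightarrow> real" where
  "q1 \<alpha> g m = (norm1 (I12 \<alpha> g m *v g) / norm2 (I12 \<alpha> g m *v g)) ^ 2"

definition c_alpha :: "real \<Rightarrow> real \<Rightarrow> real" where
  "c_alpha \<alpha> q = (sqrt (q * (\<alpha>^2 * q + 4 * (1 - \<alpha>))) - \<alpha> * q)
                   / (2 * (1 - \<alpha>) * (sqrt q * (1 - \<alpha>) + \<alpha>))"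

definition h_alpha :: "real \<Rightarrow> real ^ 'n \<Rightarrow> real" where
  "h_alpha \<alpha> v = \<alpha> * norm1 v + (1 - \<alpha>) * (norm2 v)^2"

end

theory Submission
  imports Defs
begin

lemma key:
  fixes a b \<alpha> :: real
  assumes a: "a > 0" and b: "b > 0" and al: "0 \<le> \<alpha>" "\<alpha> < 1"
  shows "\<alpha> * (\<bar>c_alpha \<alpha> ((a/b)^2) * (\<alpha>/a + (1-\<alpha>)/b)\<bar> * a)
       + (1-\<alpha>) * (\<bar>c_alpha \<alpha> ((a/b)^2) * (\<alpha>/a + (1-\<alpha>)/b)\<bar> * b)^2 = 1"
proof -
  define q where "q = (a/b)^2"
  have q: "q > 0" using a b by (simp add: q_def)
  have sq: "sqrt q = a/b" using a b by (simp add: q_def)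
  define D where "D = sqrt q * (1-\<alpha>) + \<alpha>"
  have D: "D > 0" unfolding D_def using q al by (smt (verit) mult_pos_pos real_sqrt_gt_zero)
  define S where "S = sqrt (q * (\<alpha>^2 * q + 4 * (1 - \<alpha>)))"
  have nn: "0 \<le> q * (\<alpha>^2 * q + 4 * (1 - \<alpha>))" using q al by (intro mult_nonneg_nonneg add_nonneg_nonneg; simp)
  have S2: "S^2 = q * (\<alpha>^2 * q + 4 * (1 - \<alpha>))"
    using nn unfolding S_def by (rule real_sqrt_pow2)
  have S0: "S \<ge> 0" unfolding S_def using nn by (rule real_sqrt_ge_zero)
  have SA: "S \<ge> \<alpha> * q"
  proof -
    have "(\<alpha>*q)^2 \<le> S^2" using S2 q al by (simp add: power2_eq_square)
    thus ?thesis using S0 by (meson power2_le_imp_le)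
  qed
  define t where "t = (S - \<alpha>*q) / (2*(1-\<alpha>))"
  have t0: "t \<ge> 0" unfolding t_def using SA al by simp
  have c: "c_alpha \<alpha> q = t / D" unfolding c_alpha_def t_def D_def S_def
    using al by (simp add: field_simps)
  have sa: "(\<alpha>/a + (1-\<alpha>)/b) * a = D" unfolding D_def sq using a b by (simp add: field_simps)
  have sb: "(\<alpha>/a + (1-\<alpha>)/b) * b = D / sqrt q" unfolding D_def sq using a b by (simp add: field_simps)
  have e1: "\<bar>c_alpha \<alpha> q * (\<alpha>/a + (1-\<alpha>)/b)\<bar> * a = t"
  proof -
    have "\<bar>c_alpha \<alpha> q * (\<alpha>/a + (1-\<alpha>)/b)\<bar> * a = \<bar>c_alpha \<alpha> q * ((\<alpha>/a + (1-\<alpha>)/b) * a)\<bar>"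
      using a by (simp add: abs_mult)
    also have "\<dots> = t" using c sa D t0 by simp
    finally show ?thesis .
  qed
  have e2: "\<bar>c_alpha \<alpha> q * (\<alpha>/a + (1-\<alpha>)/b)\<bar> * b = t / sqrt q"
  proof -
    have "\<bar>c_alpha \<alpha> q * (\<alpha>/a + (1-\<alpha>)/b)\<bar> * b = \<bar>c_alpha \<alpha> q * ((\<alpha>/a + (1-\<alpha>)/b) * b)\<bar>"
      using b by (simp add: abs_mult)
    also have "\<dots> = t / sqrt q" using c sb D t0 q by simp
    finally show ?thesis .
  qed
  have fin: "\<alpha> * t + (1-\<alpha>) * (t / sqrt q)^2 = 1"
  proof -
    have "(t / sqrt q)^2 = t^2 / q" using q by (simp add: power_divide)
    moreover have "\<alpha> * t + (1-\<alpha>) * (t^2/q) = 1"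
    proof -
      have t2: "2*(1-\<alpha>)*t = S - \<alpha>*q" unfolding t_def using al by simp
      have "4*(1-\<alpha>)*q*(\<alpha> * t + (1-\<alpha>) * (t^2/q)) = 2*q*\<alpha>*(2*(1-\<alpha>)*t) + (2*(1-\<alpha>)*t)^2"
        using q by (simp add: field_simps power2_eq_square)
      also have "\<dots> = 2*q*\<alpha>*(S - \<alpha>*q) + (S - \<alpha>*q)^2" by (simp only: t2)
      also have "\<dots> = S^2 - (\<alpha>*q)^2" by algebra
      also have "\<dots> = 4*(1-\<alpha>)*q * 1" unfolding S2 by algebra
      finally have "4*(1-\<alpha>)*q*(\<alpha> * t + (1-\<alpha>) * (t^2/q)) = 4*(1-\<alpha>)*q * 1" .
      moreover have "4*(1-\<alpha>)*q \<noteq> 0" using q al by simp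
      ultimately show ?thesis by (metis mult_left_cancel)
    qed
    ultimately show ?thesis by simp
  qed
  show ?thesis using e1 e2 fin unfolding q_def by simp
qed

theorem theorem1:
  fixes g :: "real ^ 'n" and \<alpha> :: real and m :: 'n
  assumes "0 \<le> \<alpha>" and "\<alpha> < 1"
    and "g \<noteq> 0"
    and "\<bar>g $ m\<bar> = Max {\<bar>g $ d\<bar> | d. True}"
  shows "h_alpha \<alpha> (c_alpha \<alpha> (q1 \<alpha> g m) *\<^sub>R delta_x12 \<alpha> g m) = 1"
proof -
  define v where "v = I12 \<alpha> g m *v g"
  have vm: "v $ m = g $ m"
  proof -
    have c: "\<alpha> * \<bar>g $ m\<bar> \<le> \<bar>g $ m\<bar>" using assms(1,2)
      by (simp add: mult_left_le_one_le)
    have "v $ m = (\<Sum>j\<in>UNIV. (if m = j then g $ j else 0))"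
      unfolding v_def I12_def matrix_vector_mult_def vec_lambda_beta
      by (rule sum.cong) (use c in auto)
    also have "\<dots> = g $ m" by simp
    finally show ?thesis .
  qed
  obtain d where d: "g $ d \<noteq> 0" using assms(3) by (metis vec_eq_iff zero_index)
  have fin: "finite {\<bar>g $ d\<bar> | d. True}"
    using finite_imageI[of UNIV "\<lambda>d. \<bar>g $ d\<bar>"] by (simp add: full_SetCompr_eq)
  have "\<bar>g $ d\<bar> \<le> \<bar>g $ m\<bar>" unfolding assms(4) using fin by (intro Max_ge) auto
  hence gm: "g $ m \<noteq> 0" using d by auto
  have v0: "v \<noteq> 0" using vm gm by (metis zero_index)
  have n1pos: "norm1 v > 0"
  proof -
    have "\<bar>v $ m\<bar> \<le> norm1 v" unfolding norm1_def
      by (rule member_le_sum) auto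
    thus ?thesis using vm gm by simp
  qed
  have n2pos: "norm2 v > 0" using v0 by (simp add: norm2_def)
  have n1s: "\<And>r w. norm1 (r *\<^sub>R (w::real^'n)) = \<bar>r\<bar> * norm1 w"
    by (simp add: norm1_def abs_mult sum_distrib_left)
  have n2s: "\<And>r w. norm2 (r *\<^sub>R (w::real^'n)) = \<bar>r\<bar> * norm2 w"
    by (simp add: norm2_def)
  define s where "s = \<alpha> / norm1 v + (1-\<alpha>) / norm2 v"
  have dx: "delta_x12 \<alpha> g m = - (s *\<^sub>R v)" unfolding delta_x12_def s_def v_def by simp
  have qq: "q1 \<alpha> g m = (norm1 v / norm2 v)^2" unfolding q1_def v_def by simp
  have eq: "c_alpha \<alpha> (q1 \<alpha> g m) *\<^sub>R delta_x12 \<alpha> g m = (- (c_alpha \<alpha> (q1 \<alpha> g m) * s)) *\<^sub>R v"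
    unfolding dx by simp
  have "h_alpha \<alpha> (c_alpha \<alpha> (q1 \<alpha> g m) *\<^sub>R delta_x12 \<alpha> g m)
     = \<alpha> * (\<bar>c_alpha \<alpha> (q1 \<alpha> g m) * s\<bar> * norm1 v) + (1-\<alpha>) * (\<bar>c_alpha \<alpha> (q1 \<alpha> g m) * s\<bar> * norm2 v)^2"
    unfolding h_alpha_def eq n1s n2s by simp
  also have "\<dots> = 1" unfolding qq s_def using key[OF n1pos n2pos assms(1,2)] by simp
  finally show ?thesis .
qed

end
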